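(* Let $\mathcal{A}:\mathbb{C}^{m\times n}\to\mathbb{C}^p$ be linear with rank-restricted isometry constant $\delta_r(\mathcal{A})$, let $\Psi\subset\mathbb{O}$ be a set of atoms with $|\Psi|\le r$, and let $\mathcal{P}:\mathbb{C}^{m\times n}\to\mathbb{C}^{m\times n}$ be an orthogonal projection operator that commutes with $\mathcal{P}_\Psi$. Then $$(1-\delta_r(\mathcal{A}))\|\mathcal{P}\mathcal{P}_\Psi X\|_F\le\|\mathcal{P}\mathcal{P}_\Psi\mathcal{A}^*\mathcal{A}\mathcal{P}\mathcal{P}_\Psi X\|_F\quad\text{for all }X\in\mathbb{C}^{m\times n}.$$
   Context: $\mathbb{C}^p$ has inner product $\langle x,y\rangle=y^Hx$ and norm $\|\cdot\|_2$; $\mathbb{C}^{m\times n}$ has inner product $\langle X,Y\rangle=\mathrm{tr}(Y^HX)$ and Frobenius norm $\|\cdot\|_F$; $\mathcal{A}^*$ is the adjoint of $\mathcal{A}$. $\delta_r(\mathcal{A})$ is the smallest $\delta\ge0$ such that $(1-\delta)\|X\|_F^2\le\|\mathcal{A}X\|_2^2\le(1+\delta)\|X\|_F^2$ for all $X$ with $\mathrm{rank}(X)\le r$. The set of atoms $\mathbb{O}$ is a set of unit-Frobenius-norm rank-one matrices in $\mathbb{C}^{m\times n}$ such that every nonzero rank-one matrix is a scalar multiple of exactly one element of $\mathbb{O}$. For $\Psi\subset\mathbb{O}$, $\mathcal{P}_\Psi$ is the orthogonal projection of $\mathbb{C}^{m\times n}$ onto $\mathrm{span}(\Psi)$. *)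

theory Defs
  imports "HOL-Analysis.Analysis"
begin

(* Matrices in C^{m x n} are rendered as complex^'n^'m (rows indexed by 'm, columns by 'n);
   vectors in C^p as complex^'p. Dimensions are arbitrary finite index types. *)

definition mscale :: "complex \<Rightarrow> complex^'n^'m \<Rightarrow> complex^'n^'m" where
  "mscale c X = (\<chi> i j. c * X $ i $ j)"

definition frob_inner :: "complex^'n^'m \<Rightarrow> complex^'n^'m \<Rightarrow> complex" where
  "frob_inner X Y = (\<Sum>i\<in>UNIV. \<Sum>j\<in>UNIV. X $ i $ j * cnj (Y $ i $ j))"

definition frob_norm :: "complex^'n^'m \<Rightarrow> real" where
  "frob_norm X = sqrt (\<Sum>i\<in>UNIV. \<Sum>j\<in>UNIV. (cmod (X $ i $ j))\<^sup>2)"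

definition vinner :: "complex^'p \<Rightarrow> complex^'p \<Rightarrow> complex" where
  "vinner x y = (\<Sum>i\<in>UNIV. x $ i * cnj (y $ i))"

definition vnorm :: "complex^'p \<Rightarrow> real" where
  "vnorm x = sqrt (\<Sum>i\<in>UNIV. (cmod (x $ i))\<^sup>2)"

definition clinear_op :: "(complex^'n^'m \<Rightarrow> complex^'p) \<Rightarrow> bool" where
  "clinear_op A \<longleftrightarrow> (\<forall>X Y. A (X + Y) = A X + A Y) \<and> (\<forall>c X. A (mscale c X) = c *s A X)"

definition clinear_mop :: "(complex^'n^'m \<Rightarrow> complex^'n^'m) \<Rightarrow> bool" where
  "clinear_mop P \<longleftrightarrow> (\<forall>X Y. P (X + Y) = P X + P Y) \<and> (\<forall>c X. P (mscale c X) = mscale c (P X))"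

definition adjoint_op :: "(complex^'n^'m \<Rightarrow> complex^'p) \<Rightarrow> complex^'p \<Rightarrow> complex^'n^'m" where
  "adjoint_op A y = (THE Z. \<forall>X. vinner (A X) y = frob_inner X Z)"

definition ric :: "(complex^'n^'m \<Rightarrow> complex^'p) \<Rightarrow> nat \<Rightarrow> real" where
  "ric A r = Inf {\<delta>. \<delta> \<ge> 0 \<and> (\<forall>X::complex^'n^'m. rank X \<le> r \<longrightarrow>
      (1 - \<delta>) * (frob_norm X)\<^sup>2 \<le> (vnorm (A X))\<^sup>2 \<and> (vnorm (A X))\<^sup>2 \<le> (1 + \<delta>) * (frob_norm X)\<^sup>2)}"

definition atom_set :: "(complex^'n^'m) set \<Rightarrow> bool" where
  "atom_set Ats \<longleftrightarrow> (\<forall>U\<in>Ats. rank U = 1 \<and> frob_norm U = 1) \<and>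
     (\<forall>X::complex^'n^'m. X \<noteq> 0 \<and> rank X = 1 \<longrightarrow> (\<exists>!U. U \<in> Ats \<and> (\<exists>c. X = mscale c U)))"

definition cspan :: "(complex^'n^'m) set \<Rightarrow> (complex^'n^'m) set" where
  "cspan S = {X. \<exists>F c. finite F \<and> F \<subseteq> S \<and> X = (\<Sum>U\<in>F. mscale (c U) U)}"

definition orth_proj_onto :: "(complex^'n^'m) set \<Rightarrow> complex^'n^'m \<Rightarrow> complex^'n^'m" where
  "orth_proj_onto V X = (THE Y. Y \<in> V \<and> (\<forall>Z\<in>V. frob_inner (X - Y) Z = 0))"

definition proj_atoms :: "(complex^'n^'m) set \<Rightarrow> complex^'n^'m \<Rightarrow> complex^'n^'m" where
  "proj_atoms \<Psi> = orth_proj_onto (cspan \<Psi>)"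

definition is_orth_projection :: "(complex^'n^'m \<Rightarrow> complex^'n^'m) \<Rightarrow> bool" where
  "is_orth_projection P \<longleftrightarrow> clinear_mop P \<and> (\<forall>X. P (P X) = P X) \<and>
     (\<forall>X Y. frob_inner (P X) Y = frob_inner X (P Y))"

end

theory Submission
  imports Defs
begin

lemma frob_norm_eq: "frob_norm X = norm X"
  unfolding frob_norm_def norm_vec_def L2_set_def
  by (simp add: sum_nonneg)

lemma vnorm_eq: "vnorm x = norm x"
  unfolding vnorm_def norm_vec_def L2_set_def by simp

lemma Re_frob: "Re (frob_inner X Y) = inner X Y"
  unfolding frob_inner_def inner_vec_def by (simp add: Re_sum inner_complex_def)

lemma Re_vinner: "Re (vinner x y) = inner x y"
  unfolding vinner_def inner_vec_def by (simp add: Re_sum inner_complex_def)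

lemma mscale_real: "mscale (complex_of_real c) X = c *\<^sub>R X"
  by (simp add: mscale_def vec_eq_iff, simp add: scaleR_conv_of_real)

lemma smult_real: "(complex_of_real c) *s x = c *\<^sub>R x"
  by (simp add: vec_eq_iff, simp add: scaleR_conv_of_real)

lemma linear_A: "clinear_op A \<Longrightarrow> linear A"
  unfolding clinear_op_def
  by (rule linearI) (auto simp flip: mscale_real smult_real)

lemma frob_inner_mscale_left: "frob_inner (mscale c X) Z = c * frob_inner X Z"
  by (simp add: frob_inner_def mscale_def sum_distrib_left mult.assoc)

lemma frob_inner_mscale_right: "frob_inner X (mscale c Z) = cnj c * frob_inner X Z"
  by (simp add: frob_inner_def mscale_def sum_distrib_left mult_ac)

lemma vinner_smult: "vinner (c *s x) y = c * vinner x y"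
  by (simp add: vinner_def sum_distrib_left mult.assoc)

lemma complex_eqI_rot: "Re a = Re b \<Longrightarrow> Re (\<i> * a) = Re (\<i> * b) \<Longrightarrow> a = b"
  by (simp add: complex_eq_iff)

lemma adjoint_eq:
  assumes "clinear_op A" shows "adjoint_op A y = adjoint A y"
proof -
  have lin: "linear A" using assms by (rule linear_A)
  have key: "vinner (A X) y = frob_inner X (adjoint A y)" for X
  proof (rule complex_eqI_rot)
    show "Re (vinner (A X) y) = Re (frob_inner X (adjoint A y))"
      by (simp add: Re_frob Re_vinner adjoint_works[OF lin])
    have "Re (\<i> * vinner (A X) y) = Re (vinner (A (mscale \<i> X)) y)"
      using assms by (simp add: clinear_op_def vinner_smult)
    also have "\<dots> = Re (frob_inner (mscale \<i> X) (adjoint A y))"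
      by (simp add: Re_frob Re_vinner adjoint_works[OF lin])
    also have "\<dots> = Re (\<i> * frob_inner X (adjoint A y))" by (simp add: frob_inner_mscale_left)
    finally show "Re (\<i> * vinner (A X) y) = Re (\<i> * frob_inner X (adjoint A y))" .
  qed
  show ?thesis unfolding adjoint_op_def
  proof (rule the_equality)
    show "\<forall>X. vinner (A X) y = frob_inner X (adjoint A y)" using key by blast
    fix Z assume h: "\<forall>X. vinner (A X) y = frob_inner X Z"
    have "inner X Z = inner X (adjoint A y)" for X
      using h key by (metis Re_frob)
    then have "inner (Z - adjoint A y) (Z - adjoint A y) = 0" by (simp add: inner_diff_right)
    then show "Z = adjoint A y" by simp
  qed
qed

lemma mscale_zero [simp]: "mscale 0 U = 0"
  by (simp add: mscale_def vec_eq_iff)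

lemma mscale_add_coef: "mscale (a + b) U = mscale a U + mscale b U"
  by (simp add: mscale_def vec_eq_iff distrib_right)

lemma mscale_mscale: "mscale a (mscale b U) = mscale (a * b) U"
  by (simp add: mscale_def vec_eq_iff mult.assoc)

lemma mscale_sum: "mscale a (\<Sum>U\<in>F. f U) = (\<Sum>U\<in>F. mscale a (f U))"
  by (induction F rule: infinite_finite_induct)
     (simp_all add: mscale_def vec_eq_iff distrib_left)

lemma cspan_fin:
  assumes "finite S" shows "cspan S = range (\<lambda>c. \<Sum>U\<in>S. mscale (c U) U)"
proof
  show "cspan S \<subseteq> range (\<lambda>c. \<Sum>U\<in>S. mscale (c U) U)"
  proof
    fix X assume "X \<in> cspan S"
    then obtain F c where F: "finite F" "F \<subseteq> S" "X = (\<Sum>U\<in>F. mscale (c U) U)"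
      by (auto simp: cspan_def)
    let ?c = "\<lambda>U. if U \<in> F then c U else 0"
    have "(\<Sum>U\<in>F. mscale (c U) U) = (\<Sum>U\<in>F. mscale (?c U) U)"
      by (rule sum.cong) auto
    also have "\<dots> = (\<Sum>U\<in>S. mscale (?c U) U)"
      by (rule sum.mono_neutral_left) (use assms F in auto)
    finally show "X \<in> range (\<lambda>c. \<Sum>U\<in>S. mscale (c U) U)" using F(3) by (rule_tac image_eqI[of _ _ ?c]) auto
  qed
  show "range (\<lambda>c. \<Sum>U\<in>S. mscale (c U) U) \<subseteq> cspan S"
    using assms by (auto simp: cspan_def)
qed

lemma range_sub:
  fixes S :: "(complex^'n^'m) set"
  shows "subspace (range (\<lambda>c. \<Sum>U\<in>S. mscale (c U) U))"
    and "Z \<in> range (\<lambda>c. \<Sum>U\<in>S. mscale (c U) U) \<Longrightarrow> mscale a Z \<in> range (\<lambda>c. \<Sum>U\<in>S. mscale (c U) U)"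
proof -
  have sc: "mscale a Z \<in> range (\<lambda>c. \<Sum>U\<in>S. mscale (c U) U)"
    if "Z \<in> range (\<lambda>c. \<Sum>U\<in>S. mscale (c U) U)" for Z a
  proof -
    from that obtain c where "Z = (\<Sum>U\<in>S. mscale (c U) U)" by blast
    then have "mscale a Z = (\<Sum>U\<in>S. mscale (a * c U) U)"
      by (simp add: mscale_sum mscale_mscale)
    then show ?thesis using rangeI[of "\<lambda>c. \<Sum>U\<in>S. mscale (c U) U" "\<lambda>U. a * c U"] by simp
  qed
  show "Z \<in> range (\<lambda>c. \<Sum>U\<in>S. mscale (c U) U) \<Longrightarrow> mscale a Z \<in> range (\<lambda>c. \<Sum>U\<in>S. mscale (c U) U)"
    by (rule sc)
  show "subspace (range (\<lambda>c. \<Sum>U\<in>S. mscale (c U) U))"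
    unfolding subspace_def
  proof (intro conjI ballI allI)
    show "0 \<in> range (\<lambda>c. \<Sum>U\<in>S. mscale (c U) U)"
      by (rule image_eqI[of _ _ "\<lambda>_. 0"]) simp_all
    fix x y assume x: "x \<in> range (\<lambda>c. \<Sum>U\<in>S. mscale (c U) U)"
      and y: "y \<in> range (\<lambda>c. \<Sum>U\<in>S. mscale (c U) U)"
    from x y obtain c1 c2 where "x = (\<Sum>U\<in>S. mscale (c1 U) U)" "y = (\<Sum>U\<in>S. mscale (c2 U) U)"
      by blast
    then have "x + y = (\<Sum>U\<in>S. mscale (c1 U + c2 U) U)"
      by (simp add: mscale_add_coef sum.distrib)
    then show "x + y \<in> range (\<lambda>c. \<Sum>U\<in>S. mscale (c U) U)"
      using rangeI[of "\<lambda>c. \<Sum>U\<in>S. mscale (c U) U" "\<lambda>U. c1 U + c2 U"] by simp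
  next
    fix c :: real and x assume x: "x \<in> range (\<lambda>c. \<Sum>U\<in>S. mscale (c U) U)"
    show "c *\<^sub>R x \<in> range (\<lambda>c. \<Sum>U\<in>S. mscale (c U) U)"
      using sc[OF x, of "complex_of_real c"] by (simp add: mscale_real)
  qed
qed


lemma proj_ex1:
  fixes V :: "(complex^'n^'m) set"
  assumes sub: "subspace V" and rot: "\<And>Z. Z \<in> V \<Longrightarrow> mscale \<i> Z \<in> V"
  shows "\<exists>!Y. Y \<in> V \<and> (\<forall>Z\<in>V. frob_inner (X - Y) Z = 0)"
proof -
  have sV: "span V = V" using sub by (simp add: span_eq_iff)
  obtain y z where y: "y \<in> span V" and z: "\<And>w. w \<in> span V \<Longrightarrow> orthogonal z w"
      and xyz: "X = y + z"
    using orthogonal_subspace_decomp_exists[of V X] by metis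
  have "y \<in> V \<and> (\<forall>Z\<in>V. frob_inner (X - y) Z = 0)"
  proof (intro conjI ballI)
    show "y \<in> V" using y sV by simp
    fix Z assume Z: "Z \<in> V"
    have 1: "Re (frob_inner z Z) = 0" using z[of Z] Z sV by (simp add: Re_frob orthogonal_def)
    have 2: "Re (frob_inner z (mscale \<i> Z)) = 0"
      using z[of "mscale \<i> Z"] rot[OF Z] sV by (simp add: Re_frob orthogonal_def)
    have "frob_inner z Z = 0" using 1 2 by (simp add: frob_inner_mscale_right complex_eq_iff)
    then show "frob_inner (X - y) Z = 0" using xyz by simp
  qed
  moreover have "Y1 = Y2" if h1: "Y1 \<in> V \<and> (\<forall>Z\<in>V. frob_inner (X - Y1) Z = 0)"
    and h2: "Y2 \<in> V \<and> (\<forall>Z\<in>V. frob_inner (X - Y2) Z = 0)" for Y1 Y2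
  proof -
    have D: "Y1 - Y2 \<in> V" using h1 h2 sub by (simp add: subspace_diff)
    have a: "inner (X - Y1) (Y1 - Y2) = 0" using h1 D by (metis Re_frob zero_complex.simps(1))
    have b: "inner (X - Y2) (Y1 - Y2) = 0" using h2 D by (metis Re_frob zero_complex.simps(1))
    have "inner ((X - Y2) - (X - Y1)) (Y1 - Y2) = 0" using a b by (simp only: inner_diff_left)
    then have "inner (Y1 - Y2) (Y1 - Y2) = 0" by simp
    then show ?thesis by simp
  qed
  ultimately show ?thesis by blast
qed

lemma row_sum_mscale: "row i (\<Sum>U\<in>F. mscale (c U) U) = (\<Sum>U\<in>F. c U *s row i U)"
  by (induction F rule: infinite_finite_induct)
     (simp_all add: row_def mscale_def vec_eq_iff)

lemma rank_sum_le:
  fixes F :: "(complex^'n^'m) set"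
  assumes "finite F"
  shows "rank (\<Sum>U\<in>F. mscale (c U) U) \<le> (\<Sum>U\<in>F. rank U)"
proof -
  have "\<forall>U. \<exists>B. B \<subseteq> rows U \<and> vec.independent B \<and> rows U \<subseteq> vec.span B \<and> card B = vec.dim (rows U)"
    by (metis vec.basis_exists)
  then obtain B :: "complex^'n^'m \<Rightarrow> (complex^'n) set" where B: "\<And>U. B U \<subseteq> rows U \<and> vec.independent (B U) \<and> rows U \<subseteq> vec.span (B U)
      \<and> card (B U) = vec.dim (rows U)" by metis
  have finB: "finite (B U)" for U using B vec.finiteI_independent by blast
  have sub: "rows (\<Sum>U\<in>F. mscale (c U) U) \<subseteq> vec.span (\<Union>U\<in>F. B U)"
  proof
    fix x assume "x \<in> rows (\<Sum>U\<in>F. mscale (c U) U)"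
    then obtain i where x: "x = row i (\<Sum>U\<in>F. mscale (c U) U)" by (auto simp: rows_def)
    have "c U *s row i U \<in> vec.span (\<Union>U\<in>F. B U)" if "U \<in> F" for U
    proof -
      have "row i U \<in> vec.span (B U)" using B[of U] by (auto simp: rows_def)
      also have "vec.span (B U) \<subseteq> vec.span (\<Union>U\<in>F. B U)"
        by (rule vec.span_mono) (use that in auto)
      finally show ?thesis by (rule vec.span_scale)
    qed
    then show "x \<in> vec.span (\<Union>U\<in>F. B U)" unfolding x row_sum_mscale
      by (rule vec.span_sum)
  qed
  have "rank (\<Sum>U\<in>F. mscale (c U) U) \<le> card (\<Union>U\<in>F. B U)"
    unfolding row_rank_def_gen
    by (rule vec.dim_le_card[OF sub]) (use assms finB in auto)
  also have "\<dots> \<le> (\<Sum>U\<in>F. card (B U))" by (rule card_UN_le[OF assms])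
  also have "\<dots> = (\<Sum>U\<in>F. rank U)" using B by (simp add: row_rank_def_gen)
  finally show ?thesis .
qed

lemma ric_lower:
  fixes A :: "complex^'n^'m \<Rightarrow> complex^'p"
  assumes "clinear_op A" "rank Y \<le> r"
  shows "(1 - ric A r) * (norm Y)^2 \<le> (norm (A Y))^2"
proof -
  let ?S = "{\<delta>. \<delta> \<ge> 0 \<and> (\<forall>X::complex^'n^'m. rank X \<le> r \<longrightarrow>
      (1 - \<delta>) * (frob_norm X)\<^sup>2 \<le> (vnorm (A X))\<^sup>2 \<and> (vnorm (A X))\<^sup>2 \<le> (1 + \<delta>) * (frob_norm X)\<^sup>2)}"
  have bl: "bounded_linear A" using linear_A[OF assms(1)] linear_conv_bounded_linear by blast
  obtain K where K: "\<And>X. norm (A X) \<le> norm X * K" "K > 0"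
    using bounded_linear.pos_bounded[OF bl] by blast
  have memb: "(1 - (1 + K^2)) * (norm X)^2 \<le> (norm (A X))^2 \<and> (norm (A X))^2 \<le> (1 + (1 + K^2)) * (norm X)^2" for X
  proof
    show "(1 - (1 + K^2)) * (norm X)^2 \<le> (norm (A X))^2"
      by (simp add: order_trans[OF _ zero_le_power2])
    have "(norm (A X))^2 \<le> (norm X * K)^2"
      using K(1)[of X] by (simp add: power_mono)
    also have "\<dots> \<le> (1 + (1 + K^2)) * (norm X)^2" by (simp add: power_mult_distrib algebra_simps)
    finally show "(norm (A X))^2 \<le> (1 + (1 + K^2)) * (norm X)^2" .
  qed
  have "1 + K^2 \<in> ?S"
    using memb by (simp only: mem_Collect_eq frob_norm_eq vnorm_eq) auto
  then have ne: "?S \<noteq> {}" by blast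
  show ?thesis
  proof (cases "norm Y = 0")
    case True then show ?thesis by simp
  next
    case False
    then have pos: "(norm Y)^2 > 0" by simp
    have "1 - (norm (A Y))^2 / (norm Y)^2 \<le> Inf ?S"
    proof (rule cInf_greatest[OF ne])
      fix d assume "d \<in> ?S"
      then have "(1 - d) * (norm Y)^2 \<le> (norm (A Y))^2"
        using assms(2) by (simp add: frob_norm_eq vnorm_eq)
      then show "1 - (norm (A Y))^2 / (norm Y)^2 \<le> d"
        using pos by (simp add: field_simps)
    qed
    then have "1 - ric A r \<le> (norm (A Y))^2 / (norm Y)^2" unfolding ric_def by simp
    then show ?thesis using pos by (simp add: field_simps)
  qed
qed


theorem proposition4:
  fixes A :: "complex^'n^'m \<Rightarrow> complex^'p"
    and r :: nat
    and Ats \<Psi> :: "(complex^'n^'m) set"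
    and P :: "complex^'n^'m \<Rightarrow> complex^'n^'m"
  assumes "clinear_op A"
    and "atom_set Ats"
    and "\<Psi> \<subseteq> Ats" and "finite \<Psi>" and "card \<Psi> \<le> r"
    and "is_orth_projection P"
    and "P \<circ> proj_atoms \<Psi> = proj_atoms \<Psi> \<circ> P"
  shows "\<forall>X. (1 - ric A r) * frob_norm (P (proj_atoms \<Psi> X))
           \<le> frob_norm (P (proj_atoms \<Psi> (adjoint_op A (A (P (proj_atoms \<Psi> X))))))"
proof
  fix X
  let ?Q = "proj_atoms \<Psi>"
  define V where "V = range (\<lambda>c. \<Sum>U\<in>\<Psi>. mscale (c U) U)"
  have QV: "?Q = orth_proj_onto V" unfolding proj_atoms_def V_def cspan_fin[OF assms(4)] ..
  have sub: "subspace V" unfolding V_def by (rule range_sub(1))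
  have rot: "\<And>Z. Z \<in> V \<Longrightarrow> mscale \<i> Z \<in> V" unfolding V_def by (rule range_sub(2))
  have Qc: "?Q W \<in> V \<and> (\<forall>Z\<in>V. frob_inner (W - ?Q W) Z = 0)" for W
    unfolding QV orth_proj_onto_def by (rule theI'[OF proj_ex1[OF sub rot]])
  have Qin: "?Q W \<in> V" for W using Qc by blast
  have Qorth: "inner (W - ?Q W) Z = 0" if "Z \<in> V" for W Z
    using Qc[of W] that by (metis Re_frob zero_complex.simps(1))
  have Qid: "?Q Y = Y" if "Y \<in> V" for Y
  proof -
    have z: "frob_inner (0::complex^'n^'m) Z = 0" for Z by (simp add: frob_inner_def)
    have "Y \<in> V \<and> (\<forall>Z\<in>V. frob_inner (Y - Y) Z = 0)" using that z by simp
    then show ?thesis unfolding QV orth_proj_onto_def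
      using the1_equality[OF proj_ex1[OF sub rot]] by blast
  qed
  have Qsa: "inner (?Q W) Y = inner W (?Q Y)" for W Y
  proof -
    have "inner (?Q W) Y = inner (?Q W) (?Q Y) + inner (?Q W) (Y - ?Q Y)"
      by (simp add: inner_diff_right)
    also have "inner (?Q W) (Y - ?Q Y) = 0" using Qorth[OF Qin[of W], of Y] by (simp add: inner_commute)
    also have "inner W (?Q Y) = inner (?Q W) (?Q Y) + inner (W - ?Q W) (?Q Y)"
      by (simp add: inner_diff_left)
    moreover have "inner (W - ?Q W) (?Q Y) = 0" using Qorth[OF Qin[of Y]] .
    ultimately show ?thesis by simp
  qed
  have Pid: "P (P W) = P W" for W using assms(6) by (simp add: is_orth_projection_def)
  have Psa: "inner (P W) Y = inner W (P Y)" for W Y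
    using assms(6) unfolding is_orth_projection_def by (metis Re_frob)
  have comm: "P (?Q W) = ?Q (P W)" for W using fun_cong[OF assms(7), of W] by simp
  define Y where "Y = P (?Q X)"
  have QY: "?Q Y = Y"
    unfolding Y_def using comm[of "?Q X"] Qid[OF Qin[of X]] by simp
  have YV: "Y \<in> V" using Qin[of Y] QY by simp
  have PY: "P Y = Y" unfolding Y_def using Pid by simp
  obtain c where Yc: "Y = (\<Sum>U\<in>\<Psi>. mscale (c U) U)" using YV unfolding V_def by blast
  have "rank Y \<le> (\<Sum>U\<in>\<Psi>. rank U)" unfolding Yc by (rule rank_sum_le[OF assms(4)])
  also have "\<dots> = (\<Sum>U\<in>\<Psi>. 1)"
    using assms(2,3) unfolding atom_set_def by (intro sum.cong) auto
  also have "\<dots> = card \<Psi>" by simp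
  finally have rk: "rank Y \<le> r" using assms(5) by simp
  define B where "B = adjoint_op A (A Y)"
  have Badj: "B = adjoint A (A Y)" unfolding B_def by (rule adjoint_eq[OF assms(1)])
  have "inner (P (?Q B)) Y = inner (?Q B) Y" using Psa[of "?Q B" Y] PY by simp
  also have "\<dots> = inner B Y" using Qsa[of B Y] QY by simp
  also have "\<dots> = (norm (A Y))^2"
    unfolding Badj using adjoint_works[OF linear_A[OF assms(1)], of Y "A Y"]
    by (simp add: inner_commute power2_norm_eq_inner)
  finally have e: "inner (P (?Q B)) Y = (norm (A Y))^2" .
  have cs: "inner (P (?Q B)) Y \<le> norm (P (?Q B)) * norm Y" by (rule norm_cauchy_schwarz)
  have low: "(1 - ric A r) * (norm Y)^2 \<le> (norm (A Y))^2" by (rule ric_lower[OF assms(1) rk])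
  have main: "(1 - ric A r) * norm Y \<le> norm (P (?Q B))"
  proof (cases "norm Y = 0")
    case True then show ?thesis by simp
  next
    case False
    then have pos: "norm Y > 0" by simp
    have "((1 - ric A r) * norm Y) * norm Y \<le> norm (P (?Q B)) * norm Y"
      using low e cs by (simp add: power2_eq_square mult.assoc)
    then show ?thesis using pos by simp
  qed
  then show "(1 - ric A r) * frob_norm (P (?Q X)) \<le> frob_norm (P (?Q (adjoint_op A (A (P (?Q X))))))"
    unfolding frob_norm_eq Y_def[symmetric] B_def[symmetric] .
qed

end
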